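(* Let $p$ be a prime, and let $e\ge 1$ and $k\ge 1$ be integers. Put $r=\gcd(k,e+1)$. Then $$\sigma_k(p^e)\equiv r\,\frac{p^{e+1}-1}{p^{r}-1}\pmod{\sigma(p^e)}.$$ Moreover, $\sigma(p^e)$ divides $\sigma_k(p^e)$ if and only if $r=1$.
   Context: For integers $k\ge 0$ and $n\ge 1$, $\sigma_k(n)=\sum_{d\mid n} d^k$, and $\sigma=\sigma_1$ is the sum-of-divisors function. *)

theory Defs
  imports "HOL-Number_Theory.Number_Theory"
begin

definition divisor_sigma :: "nat \<Rightarrow> nat \<Rightarrow> nat" where
  "divisor_sigma k n = (\<Sum>d\<in>{d. d dvd n}. d ^ k)"

end

theory Submission
  imports Defs
begin

lemma geom_nat: "((q::nat) - 1) * (\<Sum>i<d. q^i) = q^d - 1"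
proof (cases "q = 0")
  case True then show ?thesis by (cases d) simp_all
next
  case False
  show ?thesis
  proof (induction d)
    case 0 then show ?case by simp
  next
    case (Suc d)
    have "(q - 1) * (\<Sum>i<Suc d. q^i) = (q^d - 1) + (q - 1) * q^d"
      using Suc by (simp add: distrib_left)
    also have "\<dots> = q^Suc d - 1"
    proof -
      define t where "t = q^d"
      have t1: "t \<ge> 1" using False by (simp add: t_def)
      have "(q - 1) * t = q * t - t" by (simp add: diff_mult_distrib)
      moreover have "q * t \<ge> t" using False by simp
      ultimately have "(t - 1) + (q - 1) * t = q * t - 1" using t1 by linarith
      then show ?thesis by (simp add: t_def)
    qed
    finally show ?case .
  qed
qed

lemma sum_mod_rep: "(\<Sum>i<d*a. g (i mod d)) = a * (\<Sum>b<(d::nat). (g b :: nat))"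
proof (induction a)
  case 0 then show ?case by simp
next
  case (Suc a)
  have "{..<d * Suc a} = {..<d*a} \<union> {d*a..<d*a+d}" by auto
  then have "(\<Sum>i<d*Suc a. g (i mod d)) = (\<Sum>i<d*a. g (i mod d)) + (\<Sum>i\<in>{d*a..<d*a+d}. g (i mod d))"
    by (simp add: sum.union_disjoint ivl_disj_int)
  also have "(\<Sum>i\<in>{d*a..<d*a+d}. g (i mod d)) = (\<Sum>b<d. g ((d*a + b) mod d))"
    using sum.shift_bounds_nat_ivl[of "\<lambda>i. g (i mod d)" 0 "d*a" d]
    by (simp add: lessThan_atLeast0 add.commute)
  also have "\<dots> = (\<Sum>b<d. g b)" by (intro sum.cong) auto
  finally show ?case using Suc by simp
qed

lemma pow_mod_cong:
  assumes "(q::nat) \<ge> 1"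
  shows "[q^x = q^(x mod d)] (mod (q^d - 1))"
proof -
  have h: "[q^d = 1] (mod (q^d - 1))"
  proof -
    have "q^d = 1 + (q^d - 1)" using assms by simp
    then show ?thesis unfolding cong_def by (metis mod_add_self2)
  qed
  have "q^x = (q^d)^(x div d) * q^(x mod d)"
    by (simp add: power_mult[symmetric] power_add[symmetric])
  moreover have "[(q^d)^(x div d) * q^(x mod d) = 1^(x div d) * q^(x mod d)] (mod (q^d - 1))"
    by (intro cong_mult cong_pow h cong_refl)
  ultimately show ?thesis by simp
qed

lemma sigma_pp:
  assumes "prime p"
  shows "divisor_sigma k (p^e) = (\<Sum>i<Suc e. p^(i*k))"
proof -
  have "{d. d dvd p^e} = (\<lambda>i. p^i) ` {..e}"
    using divides_primepow_nat[OF assms] by auto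
  moreover have "inj_on (\<lambda>i. p^i) {..e}"
    using prime_gt_1_nat[OF assms] by (auto simp: inj_on_def)
  ultimately show ?thesis unfolding divisor_sigma_def
    by (simp add: sum.reindex lessThan_Suc_atMost power_mult mult.commute)
qed

lemma geom_lower:
  assumes "(p::nat) \<ge> 2"
  shows "(\<Sum>i<Suc j. p^i) \<ge> j + p^j"
proof (induction j)
  case 0 then show ?case by simp
next
  case (Suc j)
  have "p^j \<ge> 1" using assms by simp
  moreover have "p^Suc j \<ge> p^j" using assms by simp
  ultimately show ?case using Suc by simp
qed

lemma mod_bij:
  assumes "coprime k' (d::nat)"
  shows "bij_betw (\<lambda>b. b * k' mod d) {..<d} {..<d}"
proof -
  have inj: "inj_on (\<lambda>b. b * k' mod d) {..<d}"
  proof (rule inj_onI)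
    fix a b assume a: "a \<in> {..<d}" and b: "b \<in> {..<d}" and e: "a * k' mod d = b * k' mod d"
    then have "[a * k' = b * k'] (mod d)" by (simp add: cong_def)
    then have "[a = b] (mod d)" using assms cong_mult_rcancel_nat
      by (metis coprime_commute)
    then show "a = b" using a b by (simp add: cong_def)
  qed
  have sub: "(\<lambda>b. b * k' mod d) ` {..<d} \<subseteq> {..<d}" by auto
  have "(\<lambda>b. b * k' mod d) ` {..<d} = {..<d}"
    using endo_inj_surj[OF _ sub inj] by simp
  then show ?thesis using inj by (simp add: bij_betw_def)
qed

theorem mainTheorem4:
  fixes p e k r :: nat
  assumes "prime p" and "e \<ge> 1" and "k \<ge> 1" and "r = gcd k (e + 1)"
  shows "[divisor_sigma k (p ^ e) = r * ((p ^ (e + 1) - 1) div (p ^ r - 1))]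
           (mod divisor_sigma 1 (p ^ e))
         \<and> (divisor_sigma 1 (p ^ e) dvd divisor_sigma k (p ^ e) \<longleftrightarrow> r = 1)"
proof -
  define n where "n = e + 1"
  define d where "d = n div r"
  define k' where "k' = k div r"
  define q where "q = p ^ r"
  have p2: "p \<ge> 2" using assms(1) prime_ge_2_nat by blast
  have r0: "r > 0" using assms(3,4) by simp
  have rn: "n = r * d" unfolding d_def n_def using assms(4) by simp
  have rk: "k = r * k'" unfolding k'_def using assms(4) by simp
  have cop: "coprime k' d" unfolding k'_def d_def n_def assms(4)
    using div_gcd_coprime[of k "e+1"] assms(3) by simp
  have d0: "d > 0" using rn n_def by (metis add_gr_0 less_one mult_is_0 neq0_conv)
  have q1: "q \<ge> 2"
  proof -
    have "p ^ 1 \<le> p ^ r" using p2 r0 by (intro power_increasing) auto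
    then show ?thesis using p2 unfolding q_def by simp
  qed
  have qd: "q ^ d = p ^ n" unfolding q_def rn by (simp add: power_mult)
  define S where "S = (\<Sum>b<d. q^b)"
  define m where "m = divisor_sigma 1 (p ^ e)"
  define T where "T = (\<Sum>i<r. p^i)"
  have m_eq: "m = (\<Sum>i<n. p^i)" unfolding m_def n_def using sigma_pp[OF assms(1), of 1 e] by simp
  have gS: "(q - 1) * S = p ^ n - 1" unfolding S_def using geom_nat[of q d] qd by simp
  have gm: "(p - 1) * m = p ^ n - 1" unfolding m_eq using geom_nat[of p n] by simp
  have gT: "(p - 1) * T = q - 1" unfolding T_def q_def using geom_nat[of p r] by simp
  have S_div: "(p ^ (e + 1) - 1) div (p ^ r - 1) = S"
  proof -
    have "(p ^ (e + 1) - 1) div (p ^ r - 1) = ((q - 1) * S) div (q - 1)"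
      using gS unfolding q_def n_def by simp
    also have "\<dots> = S" using q1 by simp
    finally show ?thesis .
  qed
  have mTS: "m = T * S"
  proof -
    have "(p - 1) * m = (p - 1) * (T * S)" using gm gS gT by (simp add: mult.assoc[symmetric])
    then show ?thesis using p2 by simp
  qed
  have "q^0 \<le> S" unfolding S_def using d0 by (intro member_le_sum) auto
  then have S0: "S > 0" by simp
  have sig: "divisor_sigma k (p ^ e) = (\<Sum>i<d*r. q^(i*k'))"
  proof -
    have "divisor_sigma k (p ^ e) = (\<Sum>i<n. p^(i*k))"
      using sigma_pp[OF assms(1), of k e] n_def by simp
    also have "\<dots> = (\<Sum>i<d*r. q^(i*k'))"
    proof -
      have "{..<n} = {..<d*r}" using rn by (simp add: mult.commute)
      moreover have "\<And>i. p^(i*k) = q^(i*k')"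
        unfolding rk q_def by (simp add: power_mult[symmetric] mult.commute mult.left_commute)
      ultimately show ?thesis by simp
    qed
    finally show ?thesis .
  qed
  have c1: "[(\<Sum>i<d*r. q^(i*k')) = (\<Sum>i<d*r. q^(((i mod d) * k') mod d))] (mod (q^d - 1))"
  proof (rule cong_sum)
    fix i
    have "[q^(i*k') = q^((i*k') mod d)] (mod (q^d - 1))" using pow_mod_cong[of q "i*k'" d] q1 by linarith
    moreover have "(i*k') mod d = ((i mod d) * k') mod d" by (simp add: mod_mult_left_eq)
    ultimately show "[q^(i*k') = q^(((i mod d) * k') mod d)] (mod (q^d - 1))" by metis
  qed
  have c2: "(\<Sum>i<d*r. q^(((i mod d) * k') mod d)) = r * S"
  proof -
    have "(\<Sum>i<d*r. q^(((i mod d) * k') mod d)) = r * (\<Sum>b<d. q^((b * k') mod d))"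
      using sum_mod_rep[of "\<lambda>b. q^((b * k') mod d)" d r] by simp
    also have "(\<Sum>b<d. q^((b * k') mod d)) = S"
      unfolding S_def using sum.reindex_bij_betw[OF mod_bij[OF cop], of "\<lambda>b. q^b"] by simp
    finally show ?thesis .
  qed
  have "q^d - 1 = (p - 1) * m" using gm qd by simp
  then have mdvd: "m dvd q^d - 1" by simp
  have cong: "[divisor_sigma k (p ^ e) = r * S] (mod m)"
    using cong_dvd_modulus_nat[OF c1 mdvd] c2 sig by simp
  have part2: "m dvd divisor_sigma k (p ^ e) \<longleftrightarrow> r = 1"
  proof -
    have "m dvd divisor_sigma k (p ^ e) \<longleftrightarrow> m dvd r * S" using cong_dvd_iff[OF cong] .
    also have "\<dots> \<longleftrightarrow> T dvd r" unfolding mTS using S0 by simp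
    also have "\<dots> \<longleftrightarrow> r = 1"
    proof
      assume "T dvd r"
      show "r = 1"
      proof (rule ccontr)
        assume "r \<noteq> 1"
        then obtain j where j: "r = Suc j" "j \<ge> 1" using r0 by (cases r) auto
        have "p^1 \<le> p^j" using p2 j(2) by (intro power_increasing) auto
        then have "p^j \<ge> 2" using p2 by simp
        then have "T > r" unfolding T_def j(1) using geom_lower[OF p2, of j] by simp
        then show False using \<open>T dvd r\<close> r0 dvd_imp_le leD by blast
      qed
    next
      assume "r = 1" then show "T dvd r" unfolding T_def by simp
    qed
    finally show ?thesis .
  qed
  show ?thesis using cong part2 S_div by (simp add: m_def)
qed

end
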